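(* Let $T$ be a complete theory with monster model $\mathcal{U}$, $A\subseteq\mathcal{U}$ small, and $\nu\in\mathfrak{M}_y(\mathcal{U})$ smooth over $A$. Then for every $\mu\in\mathfrak{M}_x(\mathcal{U})$, $\mu\geq_{\mathbb{E},A}\nu$.
   Context: For $C\subseteq\mathcal{U}$, $\mathcal{L}_x(C)$ is the Boolean algebra of formulas in $x$ with parameters from $C$ modulo $T$, embedded in $\mathcal{L}_{xy}(C)$ via $\varphi(x)\mapsto\varphi(x)\wedge y=y$; $\mathfrak{M}_x(C)$ is the set of finitely additive probability measures on $\mathcal{L}_x(C)$. For $\omega\in\mathfrak{M}_{xy}(C)$, $\pi_x(\omega)(\varphi(x))=\omega(\varphi(x)\wedge y=y)$ (similarly $\pi_y$); $\omega|_D$ is restriction. $\mu\geq_{\mathbb{E},A}\nu$ means there is $\lambda\in\mathfrak{M}_{xy}(A)$ with $\pi_x(\lambda)=\mu|_A$ such that every $\omega\in\mathfrak{M}_{xy}(\mathcal{U})$ with $\omega|_A=\lambda$ and $\pi_x(\omega)=\mu$ satisfies $\pi_y(\omega)=\nu$. A global measure $\nu$ is smooth over $A$ if every $\nu'\in\mathfrak{M}_y(\mathcal{U})$ with $\nu'|_A=\nu|_A$ equals $\nu$. *)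

theory Defs
  imports Complex_Main "HOL-Library.Equipollence"
begin

datatype 'f trm = Var nat | Fn 'f "'f trm list"

datatype ('f, 'r) fm =
    FBot
  | FEq "'f trm" "'f trm"
  | FRel 'r "'f trm list"
  | FNeg "('f, 'r) fm"
  | FConj "('f, 'r) fm" "('f, 'r) fm"
  | FEx nat "('f, 'r) fm"

fun vars_trm :: "'f trm \<Rightarrow> nat set" where
  "vars_trm (Var i) = {i}"
| "vars_trm (Fn f ts) = (\<Union>t\<in>set ts. vars_trm t)"

fun FV :: "('f, 'r) fm \<Rightarrow> nat set" where
  "FV FBot = {}"
| "FV (FEq s t) = vars_trm s \<union> vars_trm t"
| "FV (FRel r ts) = (\<Union>t\<in>set ts. vars_trm t)"
| "FV (FNeg p) = FV p"
| "FV (FConj p q) = FV p \<union> FV q"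
| "FV (FEx i p) = FV p - {i}"

record ('a, 'f, 'r) struct =
  dom :: "'a set"
  fint :: "'f \<Rightarrow> 'a list \<Rightarrow> 'a"
  rint :: "'r \<Rightarrow> 'a list \<Rightarrow> bool"

fun eval :: "('a, 'f, 'r) struct \<Rightarrow> (nat \<Rightarrow> 'a) \<Rightarrow> 'f trm \<Rightarrow> 'a" where
  "eval S e (Var i) = e i"
| "eval S e (Fn f ts) = fint S f (map (eval S e) ts)"

fun sat :: "('a, 'f, 'r) struct \<Rightarrow> (nat \<Rightarrow> 'a) \<Rightarrow> ('f, 'r) fm \<Rightarrow> bool" where
  "sat S e FBot = False"
| "sat S e (FEq s t) = (eval S e s = eval S e t)"
| "sat S e (FRel r ts) = rint S r (map (eval S e) ts)"
| "sat S e (FNeg p) = (\<not> sat S e p)"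
| "sat S e (FConj p q) = (sat S e p \<and> sat S e q)"
| "sat S e (FEx i p) = (\<exists>a\<in>dom S. sat S (e(i := a)) p)"

definition is_structure :: "('a, 'f, 'r) struct \<Rightarrow> bool" where
  "is_structure S \<longleftrightarrow> dom S \<noteq> {} \<and>
     (\<forall>f as. set as \<subseteq> dom S \<longrightarrow> fint S f as \<in> dom S)"

definition params_in :: "('a, 'f, 'r) struct \<Rightarrow> 'a set \<Rightarrow> nat set \<Rightarrow> ('f, 'r) fm \<Rightarrow> (nat \<Rightarrow> 'a) \<Rightarrow> bool" where
  "params_in S B X p e \<longleftrightarrow> (\<forall>i\<in>FV p - X. e i \<in> B)"

text \<open>K is a set whose cardinality plays the role of the cardinal kappa.\<close>
definition saturated :: "('a, 'f, 'r) struct \<Rightarrow> 'k set \<Rightarrow> bool" where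
  "saturated S K \<longleftrightarrow>
    (\<forall>B (\<Sigma> :: (('f, 'r) fm \<times> (nat \<Rightarrow> 'a)) set).
       B \<subseteq> dom S \<and> B \<prec> K \<and> (\<forall>(p, e)\<in>\<Sigma>. params_in S B {0} p e) \<and>
       (\<forall>F. finite F \<and> F \<subseteq> \<Sigma> \<longrightarrow> (\<exists>a\<in>dom S. \<forall>(p, e)\<in>F. sat S (e(0 := a)) p))
       \<longrightarrow> (\<exists>a\<in>dom S. \<forall>(p, e)\<in>\<Sigma>. sat S (e(0 := a)) p))"

definition automorphism :: "('a, 'f, 'r) struct \<Rightarrow> ('a \<Rightarrow> 'a) \<Rightarrow> bool" where
  "automorphism S \<sigma> \<longleftrightarrow> bij_betw \<sigma> (dom S) (dom S) \<and>
     (\<forall>f as. set as \<subseteq> dom S \<longrightarrow> \<sigma> (fint S f as) = fint S f (map \<sigma> as)) \<and>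
     (\<forall>r as. set as \<subseteq> dom S \<longrightarrow> (rint S r (map \<sigma> as) \<longleftrightarrow> rint S r as))"

definition elementary_on :: "('a, 'f, 'r) struct \<Rightarrow> 'a set \<Rightarrow> ('a \<Rightarrow> 'a) \<Rightarrow> bool" where
  "elementary_on S B g \<longleftrightarrow> g ` B \<subseteq> dom S \<and>
     (\<forall>(p :: ('f, 'r) fm) e. params_in S B {} p e \<longrightarrow> (sat S e p \<longleftrightarrow> sat S (g \<circ> e) p))"

definition strongly_homogeneous :: "('a, 'f, 'r) struct \<Rightarrow> 'k set \<Rightarrow> bool" where
  "strongly_homogeneous S K \<longleftrightarrow>
    (\<forall>B g. B \<subseteq> dom S \<and> B \<prec> K \<and> elementary_on S B g \<longrightarrow>
       (\<exists>\<sigma>. automorphism S \<sigma> \<and> (\<forall>b\<in>B. \<sigma> b = g b)))"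

definition monster :: "('a, 'f, 'r) struct \<Rightarrow> 'k set \<Rightarrow> bool" where
  "monster S K \<longleftrightarrow> is_structure S \<and> infinite K \<and> (UNIV :: ('f + 'r) set) \<prec> K \<and>
     saturated S K \<and> strongly_homogeneous S K"

definition tuples :: "('a, 'f, 'r) struct \<Rightarrow> nat \<Rightarrow> 'a list set" where
  "tuples S n = {as. length as = n \<and> set as \<subseteq> dom S}"

definition defset :: "('a, 'f, 'r) struct \<Rightarrow> nat \<Rightarrow> ('f, 'r) fm \<Rightarrow> (nat \<Rightarrow> 'a) \<Rightarrow> 'a list set" where
  "defset S n p e = {as \<in> tuples S n. sat S (\<lambda>i. if i < n then as ! i else e i) p}"

text \<open>Elements of L_x(C), x an n-tuple of variables: C-definable subsets of U^n.\<close>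
definition definable :: "('a, 'f, 'r) struct \<Rightarrow> 'a set \<Rightarrow> nat \<Rightarrow> 'a list set \<Rightarrow> bool" where
  "definable S C n D \<longleftrightarrow>
     (\<exists>(p :: ('f, 'r) fm) e. params_in S C {..<n} p e \<and> D = defset S n p e)"

text \<open>Keisler measures in M_x(C), normalised to 0 outside L_x(C).\<close>
definition keisler :: "('a, 'f, 'r) struct \<Rightarrow> 'a set \<Rightarrow> nat \<Rightarrow> ('a list set \<Rightarrow> real) \<Rightarrow> bool" where
  "keisler S C n \<mu> \<longleftrightarrow>
     (\<forall>D. \<not> definable S C n D \<longrightarrow> \<mu> D = 0) \<and>
     (\<forall>D. definable S C n D \<longrightarrow> 0 \<le> \<mu> D) \<and>
     \<mu> (tuples S n) = 1 \<and>
     (\<forall>D E. definable S C n D \<and> definable S C n E \<and> D \<inter> E = {} \<longrightarrow> \<mu> (D \<union> E) = \<mu> D + \<mu> E)"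

definition restr :: "('a, 'f, 'r) struct \<Rightarrow> 'a set \<Rightarrow> nat \<Rightarrow> ('a list set \<Rightarrow> real) \<Rightarrow> 'a list set \<Rightarrow> real" where
  "restr S C n \<mu> D = (if definable S C n D then \<mu> D else 0)"

definition lprod :: "'a list set \<Rightarrow> 'a list set \<Rightarrow> 'a list set" where
  "lprod D E = {as @ bs | as bs. as \<in> D \<and> bs \<in> E}"

text \<open>pi_x (x an n-tuple, y an m-tuple): phi(x) is identified with phi(x) and y=y.\<close>
definition proj_x :: "('a, 'f, 'r) struct \<Rightarrow> 'a set \<Rightarrow> nat \<Rightarrow> nat \<Rightarrow> ('a list set \<Rightarrow> real) \<Rightarrow> 'a list set \<Rightarrow> real" where
  "proj_x S C n m \<omega> D = (if definable S C n D then \<omega> (lprod D (tuples S m)) else 0)"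

definition proj_y :: "('a, 'f, 'r) struct \<Rightarrow> 'a set \<Rightarrow> nat \<Rightarrow> nat \<Rightarrow> ('a list set \<Rightarrow> real) \<Rightarrow> 'a list set \<Rightarrow> real" where
  "proj_y S C n m \<omega> E = (if definable S C m E then \<omega> (lprod (tuples S n) E) else 0)"

definition geqE :: "('a, 'f, 'r) struct \<Rightarrow> 'a set \<Rightarrow> nat \<Rightarrow> nat \<Rightarrow> ('a list set \<Rightarrow> real) \<Rightarrow> ('a list set \<Rightarrow> real) \<Rightarrow> bool" where
  "geqE S A n m \<mu> \<nu> \<longleftrightarrow>
     (\<exists>lam. keisler S A (n + m) lam \<and> proj_x S A n m lam = restr S A n \<mu> \<and>
        (\<forall>\<omega>. keisler S (dom S) (n + m) \<omega> \<and> restr S A (n + m) \<omega> = lam \<and>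
              proj_x S (dom S) n m \<omega> = \<mu> \<longrightarrow> proj_y S (dom S) n m \<omega> = \<nu>))"

definition smooth :: "('a, 'f, 'r) struct \<Rightarrow> 'a set \<Rightarrow> nat \<Rightarrow> ('a list set \<Rightarrow> real) \<Rightarrow> bool" where
  "smooth S A m \<nu> \<longleftrightarrow>
     (\<forall>\<nu>'. keisler S (dom S) m \<nu>' \<and> restr S A m \<nu>' = restr S A m \<nu> \<longrightarrow> \<nu>' = \<nu>)"

end

theory Submission
  imports Defs "HOL-Analysis.Analysis"
begin


fun rn_trm :: "(nat \<Rightarrow> nat) \<Rightarrow> 'f trm \<Rightarrow> 'f trm" where
  "rn_trm f (Var i) = Var (f i)"
| "rn_trm f (Fn g ts) = Fn g (map (rn_trm f) ts)"

fun rn :: "(nat \<Rightarrow> nat) \<Rightarrow> ('f, 'r) fm \<Rightarrow> ('f, 'r) fm" where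
  "rn f FBot = FBot"
| "rn f (FEq s t) = FEq (rn_trm f s) (rn_trm f t)"
| "rn f (FRel r ts) = FRel r (map (rn_trm f) ts)"
| "rn f (FNeg p) = FNeg (rn f p)"
| "rn f (FConj p q) = FConj (rn f p) (rn f q)"
| "rn f (FEx i p) = FEx (f i) (rn f p)"

lemma eval_rn: "eval S e (rn_trm f t) = eval S (e \<circ> f) t"
  by (induction t) (simp_all add: comp_def cong: map_cong)

lemma vars_rn: "vars_trm (rn_trm f t) = f ` vars_trm t"
  by (induction t) auto

lemma sat_rn: "inj f \<Longrightarrow> sat S e (rn f p) = sat S (e \<circ> f) p"
proof (induction p arbitrary: e)
  case (FEx i p)
  have "\<And>a. (e(f i := a)) \<circ> f = (e \<circ> f)(i := a)"
    using FEx.prems by (auto simp: fun_eq_iff inj_eq)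
  then show ?case by (simp only: rn.simps sat.simps FEx.IH[OF FEx.prems])
qed (auto simp: eval_rn comp_def)

lemma FV_rn: "inj f \<Longrightarrow> FV (rn f p) = f ` FV p"
proof (induction p)
  case (FEx i p)
  then show ?case by (auto simp: inj_eq)
qed (auto simp: vars_rn)

definition envof :: "nat \<Rightarrow> 'a list \<Rightarrow> (nat \<Rightarrow> 'a) \<Rightarrow> nat \<Rightarrow> 'a" where
  "envof n as e = (\<lambda>i. if i < n then as ! i else e i)"

lemma defset_envof: "defset S n p e = {as \<in> tuples S n. sat S (envof n as e) p}"
  by (simp add: defset_def envof_def)

lemma definable_mono: "C \<subseteq> C' \<Longrightarrow> definable S C n D \<Longrightarrow> definable S C' n D"
  unfolding definable_def params_in_def by blast

lemma definable_sub: "definable S C n D \<Longrightarrow> D \<subseteq> tuples S n"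
  unfolding definable_def defset_def by auto

lemma definable_empty: "definable S C n {}"
  unfolding definable_def params_in_def defset_def
  by (rule exI[of _ FBot]) auto

lemma definable_tuples: "definable S C n (tuples S n)"
  unfolding definable_def params_in_def defset_def
  by (rule exI[of _ "FNeg FBot"]) auto

lemma definable_compl: "definable S C n D \<Longrightarrow> definable S C n (tuples S n - D)"
  unfolding definable_def params_in_def defset_def
  apply clarify
  subgoal for p e by (rule exI[of _ "FNeg p"], rule exI[of _ e]) auto
  done

lemma definable_Int:
  assumes "definable S C n D1" "definable S C n D2"
  shows "definable S C n (D1 \<inter> D2)"
proof -
  obtain p1 e1 where p1: "params_in S C {..<n} p1 e1" "D1 = defset S n p1 e1"
    using assms(1) unfolding definable_def by blast
  obtain p2 e2 where p2: "params_in S C {..<n} p2 e2" "D2 = defset S n p2 e2"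
    using assms(2) unfolding definable_def by blast
  define f1 where "f1 = (\<lambda>i::nat. if i < n then i else 2 * i)"
  define f2 where "f2 = (\<lambda>i::nat. if i < n then i else 2 * i + 1)"
  define e where "e = (\<lambda>j. if even j then e1 (j div 2) else e2 (j div 2))"
  have i1: "inj f1" unfolding f1_def inj_def by auto
  have i2: "inj f2" unfolding f2_def inj_def by auto
  have c1: "envof n as e \<circ> f1 = envof n as e1" for as
    by (auto simp: fun_eq_iff envof_def f1_def e_def)
  have c2: "envof n as e \<circ> f2 = envof n as e2" for as
    by (auto simp: fun_eq_iff envof_def f2_def e_def)
  have fv: "FV (FConj (rn f1 p1) (rn f2 p2)) = f1 ` FV p1 \<union> f2 ` FV p2"
    by (simp add: FV_rn[OF i1] FV_rn[OF i2])
  have a1: "\<not> f1 i < n \<Longrightarrow> \<not> i < n \<and> e (f1 i) = e1 i" for i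
    by (auto simp: f1_def e_def)
  have a2: "\<not> f2 i < n \<Longrightarrow> \<not> i < n \<and> e (f2 i) = e2 i" for i
    by (auto simp: f2_def e_def split: if_splits)
  have pa: "params_in S C {..<n} (FConj (rn f1 p1) (rn f2 p2)) e"
    unfolding params_in_def fv
  proof
    fix j assume "j \<in> f1 ` FV p1 \<union> f2 ` FV p2 - {..<n}"
    then consider i where "i \<in> FV p1" "\<not> f1 i < n" "j = f1 i" | i where "i \<in> FV p2" "\<not> f2 i < n" "j = f2 i"
      by auto
    then show "e j \<in> C"
    proof cases
      case 1 then show ?thesis using a1[OF 1(2)] p1(1) unfolding params_in_def by auto
    next
      case 2 then show ?thesis using a2[OF 2(2)] p2(1) unfolding params_in_def by auto
    qed
  qed
  have "D1 \<inter> D2 = defset S n (FConj (rn f1 p1) (rn f2 p2)) e"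
    using p1(2) p2(2) by (auto simp: defset_envof sat_rn[OF i1] sat_rn[OF i2] c1 c2)
  then show ?thesis using pa unfolding definable_def by blast
qed

lemma definable_Un:
  assumes "definable S C n D1" "definable S C n D2"
  shows "definable S C n (D1 \<union> D2)"
proof -
  have "D1 \<union> D2 = tuples S n - ((tuples S n - D1) \<inter> (tuples S n - D2))"
    using definable_sub[OF assms(1)] definable_sub[OF assms(2)] by blast
  then show ?thesis using assms by (simp add: definable_compl definable_Int)
qed

lemma definable_Diff:
  assumes "definable S C n D1" "definable S C n D2"
  shows "definable S C n (D1 - D2)"
proof -
  have "D1 - D2 = D1 \<inter> (tuples S n - D2)"
    using definable_sub[OF assms(1)] by blast
  then show ?thesis using assms by (simp add: definable_compl definable_Int)
qed

lemma tuples_append: "tuples S (n + m) = lprod (tuples S n) (tuples S m)"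
  unfolding tuples_def lprod_def
  apply auto
  subgoal for x by (rule exI[of _ "take n x"], rule exI[of _ "drop n x"])
     (auto dest: in_set_takeD in_set_dropD)
  done

lemma lprod_mem:
  assumes "D \<subseteq> tuples S n"
  shows "x \<in> lprod D E \<longleftrightarrow> take n x \<in> D \<and> drop n x \<in> E"
proof
  assume "x \<in> lprod D E"
  then obtain as bs where "x = as @ bs" "as \<in> D" "bs \<in> E" unfolding lprod_def by blast
  moreover have "length as = n" using assms \<open>as \<in> D\<close> by (auto simp: tuples_def)
  ultimately show "take n x \<in> D \<and> drop n x \<in> E" by simp
next
  assume "take n x \<in> D \<and> drop n x \<in> E"
  then show "x \<in> lprod D E" unfolding lprod_def
    by (intro CollectI exI[of _ "take n x"] exI[of _ "drop n x"]) simp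
qed

lemma tuples_mem_append: "cs \<in> tuples S (n + m) \<longleftrightarrow> take n cs \<in> tuples S n \<and> drop n cs \<in> tuples S m"
  by (simp add: tuples_append lprod_mem[OF subset_refl])

lemma envof_append:
  assumes "length as = n"
  shows "envof (n + m) (as @ bs) e = (\<lambda>i. if i < n then as ! i else if i < n + m then bs ! (i - n) else e i)"
  using assms by (auto simp: fun_eq_iff envof_def nth_append)

lemma definable_lprod_left:
  assumes "definable S C n D"
  shows "definable S C (n + m) (lprod D (tuples S m))"
proof -
  obtain p e where p: "params_in S C {..<n} p e" "D = defset S n p e"
    using assms unfolding definable_def by blast
  define f where "f = (\<lambda>i::nat. if i < n then i else i + m)"
  define e' where "e' = (\<lambda>j. e (j - m))"
  have i: "inj f" unfolding f_def inj_def by auto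
  have a: "\<not> f i < n + m \<Longrightarrow> \<not> i < n \<and> e' (f i) = e i" for i
    by (auto simp: f_def e'_def split: if_splits)
  have pa: "params_in S C {..<n+m} (rn f p) e'"
    unfolding params_in_def FV_rn[OF i]
  proof
    fix j assume "j \<in> f ` FV p - {..<n+m}"
    then obtain i where "i \<in> FV p" "\<not> f i < n + m" "j = f i" by auto
    then show "e' j \<in> C" using a[of i] p(1) unfolding params_in_def by auto
  qed
  have c: "envof (n+m) cs e' \<circ> f = envof n (take n cs) e" if "cs \<in> tuples S (n+m)" for cs
  proof -
    have "length cs = n + m" using that by (simp add: tuples_def)
    then show ?thesis by (auto simp: fun_eq_iff envof_def f_def e'_def)
  qed
  have "x \<in> lprod D (tuples S m) \<longleftrightarrow> x \<in> defset S (n+m) (rn f p) e'" for x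
  proof -
    have "x \<in> lprod D (tuples S m) \<longleftrightarrow> take n x \<in> D \<and> drop n x \<in> tuples S m"
      using lprod_mem[OF definable_sub[OF assms]] .
    also have "\<dots> \<longleftrightarrow> x \<in> tuples S (n+m) \<and> sat S (envof n (take n x) e) p"
      by (auto simp: p(2) defset_envof tuples_mem_append)
    also have "\<dots> \<longleftrightarrow> x \<in> defset S (n+m) (rn f p) e'"
      by (auto simp: defset_envof sat_rn[OF i] c)
    finally show ?thesis .
  qed
  then have "lprod D (tuples S m) = defset S (n+m) (rn f p) e'" by blast
  then show ?thesis using pa unfolding definable_def by blast
qed



lemma definable_lprod_right:
  assumes "definable S C m E"
  shows "definable S C (n + m) (lprod (tuples S n) E)"
proof -
  obtain p e where p: "params_in S C {..<m} p e" "E = defset S m p e"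
    using assms unfolding definable_def by blast
  define f where "f = (\<lambda>i::nat. i + n)"
  define e' where "e' = (\<lambda>j. e (j - n))"
  have i: "inj f" unfolding f_def inj_def by auto
  have a: "\<not> f i < n + m \<Longrightarrow> \<not> i < m \<and> e' (f i) = e i" for i
    by (auto simp: f_def e'_def)
  have pa: "params_in S C {..<n+m} (rn f p) e'"
    unfolding params_in_def FV_rn[OF i]
  proof
    fix j assume "j \<in> f ` FV p - {..<n+m}"
    then obtain i where "i \<in> FV p" "\<not> f i < n + m" "j = f i" by auto
    then show "e' j \<in> C" using a[of i] p(1) unfolding params_in_def by auto
  qed
  have c: "envof (n+m) cs e' \<circ> f = envof m (drop n cs) e" if "cs \<in> tuples S (n+m)" for cs
  proof -
    have "length cs = n + m" using that by (simp add: tuples_def)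
    then show ?thesis by (auto simp: fun_eq_iff envof_def f_def e'_def add.commute)
  qed
  have "x \<in> lprod (tuples S n) E \<longleftrightarrow> x \<in> defset S (n+m) (rn f p) e'" for x
  proof -
    have "x \<in> lprod (tuples S n) E \<longleftrightarrow> take n x \<in> tuples S n \<and> drop n x \<in> E"
      using lprod_mem[OF subset_refl] .
    also have "\<dots> \<longleftrightarrow> x \<in> tuples S (n+m) \<and> sat S (envof m (drop n x) e) p"
      by (auto simp: p(2) defset_envof tuples_mem_append)
    also have "\<dots> \<longleftrightarrow> x \<in> defset S (n+m) (rn f p) e'"
      by (auto simp: defset_envof sat_rn[OF i] c)
    finally show ?thesis .
  qed
  then have "lprod (tuples S n) E = defset S (n+m) (rn f p) e'" by blast
  then show ?thesis using pa unfolding definable_def by blast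
qed

definition fib :: "('a, 'f, 'r) struct \<Rightarrow> nat \<Rightarrow> 'a list set \<Rightarrow> 'a list \<Rightarrow> 'a list set" where
  "fib S n X b = {a \<in> tuples S n. a @ b \<in> X}"

lemma definable_fib:
  assumes "definable S C (n + m) X" "b \<in> tuples S m" "C \<subseteq> dom S"
  shows "definable S (dom S) n (fib S n X b)"
proof -
  obtain p e where p: "params_in S C {..<n+m} p e" "X = defset S (n+m) p e"
    using assms unfolding definable_def by blast
  define e' where "e' = (\<lambda>j. if n \<le> j \<and> j < n + m then b ! (j - n) else e j)"
  have lb: "length b = m" "set b \<subseteq> dom S" using assms(2) by (auto simp: tuples_def)
  have pa: "params_in S (dom S) {..<n} p e'"
    using p(1) assms(3) lb unfolding params_in_def e'_def by (auto simp: subset_eq)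
  have c: "envof n a e' = envof (n+m) (a @ b) e" if "length a = n" for a
    using that lb by (auto simp: fun_eq_iff envof_def e'_def nth_append)
  have t: "a @ b \<in> tuples S (n+m) \<longleftrightarrow> a \<in> tuples S n" for a
    using assms(2) by (auto simp: tuples_def)
  have "fib S n X b = defset S n p e'"
    unfolding fib_def p(2) defset_envof
    using c t lb by (auto simp: tuples_def)
  then show ?thesis using pa unfolding definable_def by blast
qed

lemma keisler_empty: "keisler S C k \<rho> \<Longrightarrow> \<rho> {} = 0"
proof -
  assume "keisler S C k \<rho>"
  then have "\<rho> ({} \<union> {}) = \<rho> {} + \<rho> {}"
    using definable_empty[of S C k] unfolding keisler_def by blast
  then show ?thesis by simp
qed

lemma keisler_le1:
  assumes "keisler S C k \<rho>" "definable S C k D"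
  shows "\<rho> D \<le> 1"
proof -
  have "tuples S k = D \<union> (tuples S k - D)" using definable_sub[OF assms(2)] by blast
  moreover have "\<rho> (D \<union> (tuples S k - D)) = \<rho> D + \<rho> (tuples S k - D)"
    using assms definable_compl[OF assms(2)] unfolding keisler_def by blast
  ultimately have "\<rho> (tuples S k) = \<rho> D + \<rho> (tuples S k - D)" by simp
  then show ?thesis using assms definable_compl[OF assms(2)] unfolding keisler_def by auto
qed

lemma keisler_nonneg: "keisler S C k \<rho> \<Longrightarrow> 0 \<le> \<rho> D"
  unfolding keisler_def by (cases "definable S C k D") auto

lemma finsupp:
  fixes B :: "'b set set" and T :: "'b set" and \<rho> :: "'b set \<Rightarrow> real"
  assumes sub: "\<And>X. X \<in> B \<Longrightarrow> X \<subseteq> T"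
    and int: "\<And>X Y. X \<in> B \<Longrightarrow> Y \<in> B \<Longrightarrow> X \<inter> Y \<in> B"
    and dif: "\<And>X Y. X \<in> B \<Longrightarrow> Y \<in> B \<Longrightarrow> X - Y \<in> B"
    and TB: "T \<in> B"
  shows "finite Ds \<Longrightarrow> Ds \<subseteq> B \<Longrightarrow> (\<forall>X\<in>B. 0 \<le> \<rho> X) \<Longrightarrow>
    (\<forall>X\<in>B. \<forall>Y\<in>B. X \<inter> Y = {} \<longrightarrow> \<rho> (X \<union> Y) = \<rho> X + \<rho> Y) \<Longrightarrow>
    R \<in> B \<Longrightarrow> (\<forall>X\<in>B. \<rho> X = \<rho> (X \<inter> R)) \<Longrightarrow>
    \<exists>Q w. finite Q \<and> Q \<subseteq> R \<and> (\<forall>b\<in>Q. 0 \<le> w b) \<and> (\<forall>E\<in>insert T Ds. \<rho> E = (\<Sum>b\<in>Q \<inter> E. w b))"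
proof (induction Ds arbitrary: \<rho> R rule: finite_induct)
  case empty
  have eB: "{} \<in> B" using dif[OF TB TB] by simp
  have "\<rho> ({} \<union> {}) = \<rho> {} + \<rho> {}" using empty.prems(3) eB by blast
  then have r0: "\<rho> {} = 0" by simp
  show ?case
  proof (cases "R = {}")
    case True
    then have "\<rho> T = 0" using empty.prems(5) TB r0 by auto
    then show ?thesis by (intro exI[of _ "{}"]) auto
  next
    case False
    then obtain b where b: "b \<in> R" by blast
    then have "b \<in> T" using sub[OF empty.prems(4)] by blast
    then show ?thesis using b empty.prems(2) TB
      by (intro exI[of _ "{b}"] exI[of _ "\<lambda>_. \<rho> T"]) auto
  qed
next
  case (insert E0 Ds)
  have E0B: "E0 \<in> B" using insert.prems(1) by blast
  have DsB: "Ds \<subseteq> B" using insert.prems(1) by blast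
  define \<rho>1 where "\<rho>1 = (\<lambda>X. \<rho> (X \<inter> E0))"
  define \<rho>2 where "\<rho>2 = (\<lambda>X. \<rho> (X - E0))"
  have "\<exists>Q w. finite Q \<and> Q \<subseteq> R \<inter> E0 \<and> (\<forall>b\<in>Q. 0 \<le> w b) \<and> (\<forall>E\<in>insert T Ds. \<rho>1 E = (\<Sum>b\<in>Q \<inter> E. w b))"
  proof (rule insert.IH[OF DsB])
    show "\<forall>X\<in>B. 0 \<le> \<rho>1 X" using insert.prems(2) int E0B unfolding \<rho>1_def by blast
    show "\<forall>X\<in>B. \<forall>Y\<in>B. X \<inter> Y = {} \<longrightarrow> \<rho>1 (X \<union> Y) = \<rho>1 X + \<rho>1 Y"
    proof (intro ballI impI)
      fix X Y assume "X \<in> B" "Y \<in> B" "X \<inter> Y = {}"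
      moreover have "(X \<union> Y) \<inter> E0 = X \<inter> E0 \<union> Y \<inter> E0" by blast
      moreover have "(X \<inter> E0) \<inter> (Y \<inter> E0) = {}" using \<open>X \<inter> Y = {}\<close> by blast
      moreover have "X \<inter> E0 \<in> B" "Y \<inter> E0 \<in> B" using int E0B \<open>X \<in> B\<close> \<open>Y \<in> B\<close> by auto
      ultimately show "\<rho>1 (X \<union> Y) = \<rho>1 X + \<rho>1 Y" unfolding \<rho>1_def
        using insert.prems(3) by simp
    qed
    show "R \<inter> E0 \<in> B" using int[OF insert.prems(4) E0B] .
    show "\<forall>X\<in>B. \<rho>1 X = \<rho>1 (X \<inter> (R \<inter> E0))"
    proof
      fix X assume "X \<in> B"
      then have "\<rho> (X \<inter> E0) = \<rho> (X \<inter> E0 \<inter> R)" using insert.prems(5) int E0B by blast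
      moreover have "X \<inter> E0 \<inter> R = X \<inter> (R \<inter> E0) \<inter> E0" by blast
      ultimately show "\<rho>1 X = \<rho>1 (X \<inter> (R \<inter> E0))" unfolding \<rho>1_def by simp
    qed
  qed
  then obtain Q1 w1 where Q1: "finite Q1" "Q1 \<subseteq> R \<inter> E0" "\<forall>b\<in>Q1. 0 \<le> w1 b"
    "\<forall>E\<in>insert T Ds. \<rho>1 E = (\<Sum>b\<in>Q1 \<inter> E. w1 b)" by blast
  have "\<exists>Q w. finite Q \<and> Q \<subseteq> R - E0 \<and> (\<forall>b\<in>Q. 0 \<le> w b) \<and> (\<forall>E\<in>insert T Ds. \<rho>2 E = (\<Sum>b\<in>Q \<inter> E. w b))"
  proof (rule insert.IH[OF DsB])
    show "\<forall>X\<in>B. 0 \<le> \<rho>2 X" using insert.prems(2) dif E0B unfolding \<rho>2_def by blast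
    show "\<forall>X\<in>B. \<forall>Y\<in>B. X \<inter> Y = {} \<longrightarrow> \<rho>2 (X \<union> Y) = \<rho>2 X + \<rho>2 Y"
    proof (intro ballI impI)
      fix X Y assume "X \<in> B" "Y \<in> B" "X \<inter> Y = {}"
      moreover have "(X \<union> Y) - E0 = (X - E0) \<union> (Y - E0)" by blast
      moreover have "(X - E0) \<inter> (Y - E0) = {}" using \<open>X \<inter> Y = {}\<close> by blast
      moreover have "X - E0 \<in> B" "Y - E0 \<in> B" using dif E0B \<open>X \<in> B\<close> \<open>Y \<in> B\<close> by auto
      ultimately show "\<rho>2 (X \<union> Y) = \<rho>2 X + \<rho>2 Y" unfolding \<rho>2_def
        using insert.prems(3) by simp
    qed
    show "R - E0 \<in> B" using dif[OF insert.prems(4) E0B] .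
    show "\<forall>X\<in>B. \<rho>2 X = \<rho>2 (X \<inter> (R - E0))"
    proof
      fix X assume "X \<in> B"
      then have "\<rho> (X - E0) = \<rho> ((X - E0) \<inter> R)" using insert.prems(5) dif E0B by blast
      moreover have "(X - E0) \<inter> R = X \<inter> (R - E0) - E0" by blast
      ultimately show "\<rho>2 X = \<rho>2 (X \<inter> (R - E0))" unfolding \<rho>2_def by simp
    qed
  qed
  then obtain Q2 w2 where Q2: "finite Q2" "Q2 \<subseteq> R - E0" "\<forall>b\<in>Q2. 0 \<le> w2 b"
    "\<forall>E\<in>insert T Ds. \<rho>2 E = (\<Sum>b\<in>Q2 \<inter> E. w2 b)" by blast
  define w where "w = (\<lambda>b. if b \<in> Q1 then w1 b else w2 b)"
  have disj: "Q1 \<inter> Q2 = {}" using Q1(2) Q2(2) by blast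
  have sumsplit: "(\<Sum>b\<in>(Q1 \<union> Q2) \<inter> E. w b) = (\<Sum>b\<in>Q1 \<inter> E. w1 b) + (\<Sum>b\<in>Q2 \<inter> E. w2 b)" for E
  proof -
    have "(Q1 \<union> Q2) \<inter> E = (Q1 \<inter> E) \<union> (Q2 \<inter> E)" by blast
    then have "(\<Sum>b\<in>(Q1 \<union> Q2) \<inter> E. w b) = (\<Sum>b\<in>Q1 \<inter> E. w b) + (\<Sum>b\<in>Q2 \<inter> E. w b)"
      using Q1(1) Q2(1) disj by (simp add: sum.union_disjoint disjoint_iff)
    moreover have "(\<Sum>b\<in>Q1 \<inter> E. w b) = (\<Sum>b\<in>Q1 \<inter> E. w1 b)" by (rule sum.cong) (auto simp: w_def)
    moreover have "(\<Sum>b\<in>Q2 \<inter> E. w b) = (\<Sum>b\<in>Q2 \<inter> E. w2 b)"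
      using disj by (intro sum.cong) (auto simp: w_def)
    ultimately show ?thesis by simp
  qed
  have RT: "R \<subseteq> T" using sub[OF insert.prems(4)] .
  show ?case
  proof (intro exI[of _ "Q1 \<union> Q2"] exI[of _ w] conjI ballI)
    show "finite (Q1 \<union> Q2)" using Q1(1) Q2(1) by simp
    show "Q1 \<union> Q2 \<subseteq> R" using Q1(2) Q2(2) by blast
    show "0 \<le> w b" if "b \<in> Q1 \<union> Q2" for b using that Q1(3) Q2(3) by (auto simp: w_def)
    fix E assume E: "E \<in> insert T (insert E0 Ds)"
    show "\<rho> E = (\<Sum>b\<in>(Q1 \<union> Q2) \<inter> E. w b)"
    proof (cases "E = E0")
      case True
      have "\<rho> E0 = \<rho>1 T" unfolding \<rho>1_def using sub[OF E0B] by (simp add: Int_absorb1)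
      also have "\<dots> = (\<Sum>b\<in>Q1 \<inter> T. w1 b)" using Q1(4) by blast
      also have "Q1 \<inter> T = Q1" using Q1(2) RT by blast
      also have "Q1 = (Q1 \<union> Q2) \<inter> E0" using Q1(2) Q2(2) by blast
      also have "(\<Sum>b\<in>(Q1 \<union> Q2) \<inter> E0. w1 b) = (\<Sum>b\<in>(Q1 \<union> Q2) \<inter> E0. w b)"
        using Q1(2) Q2(2) by (intro sum.cong) (auto simp: w_def)
      finally show ?thesis using True by simp
    next
      case False
      then have E': "E \<in> insert T Ds" using E by blast
      then have EB: "E \<in> B" using DsB TB by blast
      have e1: "E = (E \<inter> E0) \<union> (E - E0)" and e2: "(E \<inter> E0) \<inter> (E - E0) = {}" by blast+
      have "\<rho> ((E \<inter> E0) \<union> (E - E0)) = \<rho> (E \<inter> E0) + \<rho> (E - E0)"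
        using insert.prems(3) int[OF EB E0B] dif[OF EB E0B] e2 by blast
      then have "\<rho> E = \<rho>1 E + \<rho>2 E" unfolding \<rho>1_def \<rho>2_def using e1 by simp
      also have "\<dots> = (\<Sum>b\<in>Q1 \<inter> E. w1 b) + (\<Sum>b\<in>Q2 \<inter> E. w2 b)" using Q1(4) Q2(4) E' by metis
      finally show ?thesis using sumsplit by simp
    qed
  qed
qed



lemma fib_tuples: "b \<in> tuples S m \<Longrightarrow> fib S n (tuples S (n + m)) b = tuples S n"
  by (auto simp: fib_def tuples_def)

lemma fib_Un: "fib S n (X \<union> Y) b = fib S n X b \<union> fib S n Y b"
  by (auto simp: fib_def)

lemma fib_disj: "X \<inter> Y = {} \<Longrightarrow> fib S n X b \<inter> fib S n Y b = {}"
  by (auto simp: fib_def)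

lemma take_drop_tup: "a \<in> tuples S n \<Longrightarrow> take n (a @ b) = a \<and> drop n (a @ b) = b"
  by (simp add: tuples_def)

lemma fib_left:
  assumes "D \<subseteq> tuples S n" "b \<in> tuples S m"
  shows "fib S n (lprod D (tuples S m)) b = D"
  using assms take_drop_tup[of _ S n b] unfolding fib_def lprod_mem[OF assms(1)] by auto

lemma fib_right: "b \<in> tuples S m \<Longrightarrow> fib S n (lprod (tuples S n) E) b = (if b \<in> E then tuples S n else {})"
  using take_drop_tup[of _ S n b] unfolding fib_def lprod_mem[OF subset_refl] by auto

lemma keisler_add: "keisler S C k \<rho> \<Longrightarrow> definable S C k D \<Longrightarrow> definable S C k E \<Longrightarrow> D \<inter> E = {}
  \<Longrightarrow> \<rho> (D \<union> E) = \<rho> D + \<rho> E"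
  unfolding keisler_def by blast

lemma coupling_fin:
  assumes A: "A \<subseteq> dom S" and nu: "keisler S (dom S) m \<nu>" and mu: "keisler S (dom S) n \<mu>"
    and fin: "finite Es" and Es: "Es \<subseteq> {E. definable S A m E}"
  shows "\<exists>lam. (\<forall>C. lam C \<in> {0..1}) \<and> keisler S A (n+m) lam \<and> proj_x S A n m lam = restr S A n \<mu>
     \<and> (\<forall>E\<in>Es. lam (lprod (tuples S n) E) = \<nu> E)"
proof -
  let ?B = "{E. definable S A m E}"
  have dA: "definable S A k X \<Longrightarrow> definable S (dom S) k X" for k X using definable_mono[OF A] .
  have "\<exists>Q w. finite Q \<and> Q \<subseteq> tuples S m \<and> (\<forall>b\<in>Q. 0 \<le> w b) \<and>
      (\<forall>E\<in>insert (tuples S m) Es. \<nu> E = (\<Sum>b\<in>Q \<inter> E. w b))"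
  proof (rule finsupp[of ?B "tuples S m"])
    show "X \<subseteq> tuples S m" if "X \<in> ?B" for X using that definable_sub by blast
    show "X \<inter> Y \<in> ?B" if "X \<in> ?B" "Y \<in> ?B" for X Y using that definable_Int by blast
    show "X - Y \<in> ?B" if "X \<in> ?B" "Y \<in> ?B" for X Y using that definable_Diff by blast
    show "tuples S m \<in> ?B" using definable_tuples by blast
    show "finite Es" "Es \<subseteq> ?B" by fact+
    show "\<forall>X\<in>?B. 0 \<le> \<nu> X" using nu keisler_nonneg by blast
    show "\<forall>X\<in>?B. \<forall>Y\<in>?B. X \<inter> Y = {} \<longrightarrow> \<nu> (X \<union> Y) = \<nu> X + \<nu> Y"
      using keisler_add[OF nu] dA by simp
    show "tuples S m \<in> ?B" using definable_tuples by blast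
    show "\<forall>X\<in>?B. \<nu> X = \<nu> (X \<inter> tuples S m)"
    proof
      fix X assume "X \<in> ?B"
      then have "X \<inter> tuples S m = X" using definable_sub by blast
      then show "\<nu> X = \<nu> (X \<inter> tuples S m)" by simp
    qed
  qed
  then obtain Q w where Q: "finite Q" "Q \<subseteq> tuples S m" "\<forall>b\<in>Q. 0 \<le> w b"
    "\<forall>E\<in>insert (tuples S m) Es. \<nu> E = (\<Sum>b\<in>Q \<inter> E. w b)" by blast
  have QT: "Q \<inter> tuples S m = Q" using Q(2) by blast
  have sw: "(\<Sum>b\<in>Q. w b) = 1" using Q(4) nu QT unfolding keisler_def by auto
  define lam where "lam = (\<lambda>C. if definable S A (n+m) C then (\<Sum>b\<in>Q. w b * \<mu> (fib S n C b)) else 0)"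
  have fd: "definable S (dom S) n (fib S n C b)" if "definable S A (n+m) C" "b \<in> Q" for C b
    using definable_fib[OF that(1) _ A] that(2) Q(2) by blast
  have mu0: "0 \<le> \<mu> X" for X using keisler_nonneg[OF mu] .
  have mu1: "\<mu> (fib S n C b) \<le> 1" if "definable S A (n+m) C" "b \<in> Q" for C b
    using keisler_le1[OF mu fd[OF that]] .
  have box: "lam C \<in> {0..1}" for C
  proof (cases "definable S A (n+m) C")
    case True
    have "(\<Sum>b\<in>Q. w b * \<mu> (fib S n C b)) \<le> (\<Sum>b\<in>Q. w b * 1)"
      using Q(3) mu1[OF True] by (intro sum_mono mult_left_mono) auto
    moreover have "0 \<le> (\<Sum>b\<in>Q. w b * \<mu> (fib S n C b))"
      using Q(3) mu0 by (intro sum_nonneg mult_nonneg_nonneg) auto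
    ultimately show ?thesis using True sw by (simp add: lam_def)
  qed (simp add: lam_def)
  have kl: "keisler S A (n+m) lam"
    unfolding keisler_def
  proof (intro conjI allI impI)
    show "lam D = 0" if "\<not> definable S A (n + m) D" for D using that by (simp add: lam_def)
    show "0 \<le> lam D" for D using box[of D] by simp
    have "lam (tuples S (n+m)) = (\<Sum>b\<in>Q. w b * \<mu> (tuples S n))"
      using definable_tuples[of S A "n+m"] Q(2) by (auto simp: lam_def fib_tuples intro!: sum.cong)
    then show "lam (tuples S (n+m)) = 1" using mu sw unfolding keisler_def by simp
    fix D E assume h: "definable S A (n + m) D \<and> definable S A (n + m) E \<and> D \<inter> E = {}"
    have "definable S A (n+m) (D \<union> E)" using h definable_Un by blast
    then have "lam (D \<union> E) = (\<Sum>b\<in>Q. w b * \<mu> (fib S n D b \<union> fib S n E b))"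
      by (simp add: lam_def fib_Un)
    also have "\<dots> = (\<Sum>b\<in>Q. w b * \<mu> (fib S n D b) + w b * \<mu> (fib S n E b))"
    proof (rule sum.cong)
      fix b assume "b \<in> Q"
      then have "\<mu> (fib S n D b \<union> fib S n E b) = \<mu> (fib S n D b) + \<mu> (fib S n E b)"
        using keisler_add[OF mu fd fd] h fib_disj by blast
      then show "w b * \<mu> (fib S n D b \<union> fib S n E b) = w b * \<mu> (fib S n D b) + w b * \<mu> (fib S n E b)"
        by (simp add: distrib_left)
    qed simp
    also have "\<dots> = lam D + lam E" using h by (simp add: lam_def sum.distrib)
    finally show "lam (D \<union> E) = lam D + lam E" .
  qed
  have px: "proj_x S A n m lam = restr S A n \<mu>"
  proof
    fix D show "proj_x S A n m lam D = restr S A n \<mu> D"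
    proof (cases "definable S A n D")
      case True
      have "lam (lprod D (tuples S m)) = (\<Sum>b\<in>Q. w b * \<mu> D)"
        using definable_lprod_left[OF True] definable_sub[OF True] Q(2)
        by (auto simp: lam_def fib_left intro!: sum.cong)
      also have "\<dots> = \<mu> D" using sw by (simp add: sum_distrib_right[symmetric])
      finally show ?thesis using True by (simp add: proj_x_def restr_def)
    qed (simp add: proj_x_def restr_def)
  qed
  have py: "lam (lprod (tuples S n) E) = \<nu> E" if "E \<in> Es" for E
  proof -
    have dE: "definable S A m E" using that Es by blast
    have "lam (lprod (tuples S n) E) = (\<Sum>b\<in>Q. if b \<in> E then w b else 0)"
      using definable_lprod_right[OF dE] Q(2) mu keisler_empty[OF mu]
      by (auto simp: lam_def fib_right keisler_def intro!: sum.cong)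
    also have "\<dots> = (\<Sum>b\<in>Q \<inter> E. w b)" using Q(1) by (simp add: sum.inter_restrict)
    also have "\<dots> = \<nu> E" using Q(4) that by simp
    finally show ?thesis .
  qed
  show ?thesis using box kl px py by blast
qed



lemma closed_imp_const: "closed {x. Q x} \<Longrightarrow> closed {x. P \<longrightarrow> Q x}"
  by (cases P) auto

lemma compact_box: "compact {f :: 'b \<Rightarrow> real. \<forall>i. f i \<in> {0..1}}"
proof -
  have "compactin (product_topology (\<lambda>i. euclidean) UNIV) (PiE UNIV (\<lambda>i::'b. {0..1::real}))"
    by (simp add: compactin_PiE)
  moreover have "PiE UNIV (\<lambda>i::'b. {0..1::real}) = {f. \<forall>i. f i \<in> {0..1}}" by auto
  ultimately show ?thesis by (simp add: euclidean_product_topology)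
qed

lemma coupling:
  assumes A: "A \<subseteq> dom S" and nu: "keisler S (dom S) m \<nu>" and mu: "keisler S (dom S) n \<mu>"
  shows "\<exists>lam. keisler S A (n+m) lam \<and> proj_x S A n m lam = restr S A n \<mu>
     \<and> (\<forall>E. definable S A m E \<longrightarrow> lam (lprod (tuples S n) E) = \<nu> E)"
proof -
  define Box where "Box = {lam :: 'a list set \<Rightarrow> real. \<forall>C. lam C \<in> {0..1}}"
  define Km where "Km = {lam. keisler S A (n+m) lam \<and> proj_x S A n m lam = restr S A n \<mu>}"
  define Ky where "Ky = (\<lambda>E. {lam :: 'a list set \<Rightarrow> real. lam (lprod (tuples S n) E) = \<nu> E})"
  have Km_eq: "Km = {lam.
      (\<forall>D. \<not> definable S A (n+m) D \<longrightarrow> lam D = 0) \<and>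
      (\<forall>D. definable S A (n+m) D \<longrightarrow> 0 \<le> lam D) \<and>
      lam (tuples S (n+m)) = 1 \<and>
      (\<forall>D. \<forall>E. definable S A (n+m) D \<and> definable S A (n+m) E \<and> D \<inter> E = {} \<longrightarrow> lam (D \<union> E) = lam D + lam E) \<and>
      (\<forall>D. definable S A n D \<longrightarrow> lam (lprod D (tuples S m)) = \<mu> D)}"
    unfolding Km_def keisler_def proj_x_def restr_def fun_eq_iff by auto
  have cKm: "closed Km"
    unfolding Km_eq
    by (intro closed_Collect_conj closed_Collect_all closed_imp_const closed_Collect_eq closed_Collect_le
        continuous_intros continuous_on_product_coordinates)
  have cKy: "closed (Ky E)" for E
    unfolding Ky_def
    by (intro closed_Collect_eq continuous_intros continuous_on_product_coordinates)
  have "compact (Box \<inter> Km)" unfolding Box_def using compact_box cKm by (rule compact_Int_closed)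
  then have "(Box \<inter> Km) \<inter> (\<Inter>E\<in>{E. definable S A m E}. Ky E) \<noteq> {}"
  proof (rule compact_imp_fip_image)
    show "closed (Ky E)" for E by (rule cKy)
    fix I' assume "finite I'" "I' \<subseteq> {E. definable S A m E}"
    from coupling_fin[OF A nu mu this] obtain lam where
      "(\<forall>C. lam C \<in> {0..1}) \<and> keisler S A (n+m) lam \<and> proj_x S A n m lam = restr S A n \<mu>
        \<and> (\<forall>E\<in>I'. lam (lprod (tuples S n) E) = \<nu> E)" by blast
    then have "lam \<in> Box \<inter> Km \<inter> (\<Inter>E\<in>I'. Ky E)" unfolding Box_def Km_def Ky_def by blast
    then show "Box \<inter> Km \<inter> (\<Inter>E\<in>I'. Ky E) \<noteq> {}" by blast
  qed
  then obtain lam where "lam \<in> Km" "\<forall>E. definable S A m E \<longrightarrow> lam \<in> Ky E" by blast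
  then show ?thesis unfolding Km_def Ky_def by blast
qed

theorem proposition4p6:
  fixes S :: "('a, 'f, 'r) struct" and K :: "'k set" and A :: "'a set"
    and n m :: nat and \<mu> \<nu> :: "'a list set \<Rightarrow> real"
  assumes "monster S K"
    and "A \<subseteq> dom S" and "A \<prec> K"
    and "keisler S (dom S) m \<nu>" and "smooth S A m \<nu>"
    and "keisler S (dom S) n \<mu>"
  shows "geqE S A n m \<mu> \<nu>"
proof -
  note A = assms(2) and nu = assms(4) and sm = assms(5) and mu = assms(6)
  obtain lam where lam: "keisler S A (n+m) lam" "proj_x S A n m lam = restr S A n \<mu>"
    "\<forall>E. definable S A m E \<longrightarrow> lam (lprod (tuples S n) E) = \<nu> E"
    using coupling[OF A nu mu] by blast
  have dA: "definable S A k X \<Longrightarrow> definable S (dom S) k X" for k X using definable_mono[OF A] .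
  show ?thesis unfolding geqE_def
  proof (intro exI[of _ lam] conjI allI impI lam(1,2))
    fix \<omega> assume h: "keisler S (dom S) (n + m) \<omega> \<and> restr S A (n + m) \<omega> = lam \<and>
      proj_x S (dom S) n m \<omega> = \<mu>"
    then have om: "keisler S (dom S) (n + m) \<omega>" and ol: "restr S A (n + m) \<omega> = lam" by auto
    define \<nu>' where "\<nu>' = proj_y S (dom S) n m \<omega>"
    have k': "keisler S (dom S) m \<nu>'"
      unfolding keisler_def
    proof (intro conjI allI impI)
      show "\<nu>' D = 0" if "\<not> definable S (dom S) m D" for D using that by (simp add: \<nu>'_def proj_y_def)
      show "0 \<le> \<nu>' D" for D using keisler_nonneg[OF om] by (simp add: \<nu>'_def proj_y_def)
      show "\<nu>' (tuples S m) = 1" using om definable_tuples[of S "dom S" m]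
        by (simp add: \<nu>'_def proj_y_def tuples_append[symmetric] keisler_def)
      fix D E assume d: "definable S (dom S) m D \<and> definable S (dom S) m E \<and> D \<inter> E = {}"
      have u: "lprod (tuples S n) (D \<union> E) = lprod (tuples S n) D \<union> lprod (tuples S n) E"
        unfolding lprod_def by blast
      have di: "lprod (tuples S n) D \<inter> lprod (tuples S n) E = {}"
      proof -
        have "x \<notin> lprod (tuples S n) D \<inter> lprod (tuples S n) E" for x
          using d lprod_mem[OF subset_refl, of x S n D] lprod_mem[OF subset_refl, of x S n E] by auto
        then show ?thesis by blast
      qed
      have "\<omega> (lprod (tuples S n) (D \<union> E)) = \<omega> (lprod (tuples S n) D) + \<omega> (lprod (tuples S n) E)"
        unfolding u using keisler_add[OF om definable_lprod_right definable_lprod_right di] d by simp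
      then show "\<nu>' (D \<union> E) = \<nu>' D + \<nu>' E"
        using d definable_Un[of S "dom S" m D E] by (simp add: \<nu>'_def proj_y_def)
    qed
    have r: "restr S A m \<nu>' = restr S A m \<nu>"
    proof
      fix E show "restr S A m \<nu>' E = restr S A m \<nu> E"
      proof (cases "definable S A m E")
        case True
        have "\<nu>' E = \<omega> (lprod (tuples S n) E)" using dA[OF True] by (simp add: \<nu>'_def proj_y_def)
        also have "\<dots> = restr S A (n+m) \<omega> (lprod (tuples S n) E)"
          using definable_lprod_right[OF True] by (simp add: restr_def)
        also have "\<dots> = \<nu> E" using ol lam(3) True by simp
        finally show ?thesis using True by (simp add: restr_def)
      qed (simp add: restr_def)
    qed
    have "\<nu>' = \<nu>" using sm k' r unfolding smooth_def by blast
    then show "proj_y S (dom S) n m \<omega> = \<nu>" by (simp add: \<nu>'_def)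
  qed
qed

end
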